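(* Assume the setup of the context and let $t\in\mathbb{R}$ be proper, with $A+tB=u(x,y;t)\prod_{j=1}^M(y+q_j(x)+x^{2L_j}\psi_j(x;t))$ as in the definition of proper. Then for each $j=1,\dots,M$, $$\mathrm{Ord}\bigl(B(x,-q_j(x)-x^{2L_j}\psi_j(x;t))\bigr)=\sum_{i=1}^MO_{ij}=2L_j+\sum_{i\ne j}O_{ij},$$ $$\mathrm{Ord}\bigl((A_y+tB_y)(x,-q_j(x)-x^{2L_j}\psi_j(x;t))\bigr)=\sum_{i\neq j}O_{ij}.$$
   Context: Setup: $P\in\mathbb{C}[x,y]$ has no zeros in $\mathbb{R}\times\mathbb{H}$ ($\mathbb{H}=\{\operatorname{Im}z>0\}$), no factors in common with $\bar P(x,y)=\overline{P(\bar x,\bar y)}$, $M=\mathrm{Ord}(P(0,y))$, and the coefficient of $y^M$ in $P(0,y)$ is real. Locally $P=u\prod_{j=1}^M(y+q_j(x)+x^{2L_j}\psi_j(x^{1/k}))$ with $u$ a unit, $k\ge1$, $L_j\in\mathbb{N}$, $q_j\in\mathbb{R}[x]$, $q_j(0)=0$, $\deg q_j<2L_j$, $\psi_j\in\mathbb{C}\{x\}$, $\operatorname{Im}\psi_j(0)>0$. $A=\tfrac12(P+\bar P)$, $B=\tfrac1{2i}(P-\bar P)$, subscripts $y$ denote $\partial/\partial y$. $O_{ij}=\min\{\mathrm{Ord}(q_j-q_i),2L_j,2L_i\}$, Ord = order of vanishing at $0$. A real $t$ is called proper if there is a local factorization $A+tB=u(x,y;t)\prod_{j=1}^M(y+q_j(x)+x^{2L_j}\psi_j(x;t))$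 with $u(\cdot,\cdot;t)$ a unit in $\mathbb{C}\{x,y\}$, $\psi_j(\cdot;t)\in\mathbb{R}\{x\}$, and $\mathrm{Ord}(q_j-q_i+x^{2L_j}\psi_j(x;t)-x^{2L_i}\psi_i(x;t))=O_{ij}$ for all $i\ne j$ (all but finitely many $t$ are proper). *)

theory Defs
  imports "HOL-Analysis.Analysis" "HOL-Computational_Algebra.Polynomial"
begin

text \<open>Bivariate polynomials P in C[x,y] are represented as polynomials in y whose
  coefficients are polynomials in x (type complex poly poly).\<close>

definition pev :: "complex poly poly \<Rightarrow> complex \<Rightarrow> complex \<Rightarrow> complex" where
  "pev P x y = poly (map_poly (\<lambda>c. poly c x) P) y"

definition at_x0 :: "complex poly poly \<Rightarrow> complex poly" where
  "at_x0 P = map_poly (\<lambda>c. poly c 0) P"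

text \<open>bar P (x,y) = conj (P (conj x, conj y)): conjugate all coefficients.\<close>
definition pbar :: "complex poly poly \<Rightarrow> complex poly poly" where
  "pbar P = map_poly (map_poly cnj) P"

definition Apart :: "complex poly poly \<Rightarrow> complex \<Rightarrow> complex \<Rightarrow> complex" where
  "Apart P x y = (pev P x y + pev (pbar P) x y) / 2"

definition Bpart :: "complex poly poly \<Rightarrow> complex \<Rightarrow> complex \<Rightarrow> complex" where
  "Bpart P x y = (pev P x y - pev (pbar P) x y) / (2 * \<i>)"

definition Ord :: "(complex \<Rightarrow> complex) \<Rightarrow> enat" where
  "Ord f = (if \<exists>n. (deriv ^^ n) f 0 \<noteq> 0
            then enat (LEAST n. (deriv ^^ n) f 0 \<noteq> 0) else \<infinity>)"

definition cps1 :: "(complex \<Rightarrow> complex) \<Rightarrow> bool" where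
  "cps1 f \<longleftrightarrow> (\<exists>r>0. \<exists>a::nat \<Rightarrow> complex. \<forall>x. norm x < r \<longrightarrow>
        (\<lambda>n. a n * x ^ n) sums f x)"

definition rps1 :: "(complex \<Rightarrow> complex) \<Rightarrow> bool" where
  "rps1 f \<longleftrightarrow> (\<exists>r>0. \<exists>a::nat \<Rightarrow> real. \<forall>x. norm x < r \<longrightarrow>
        (\<lambda>n. complex_of_real (a n) * x ^ n) sums f x)"

definition cps2 :: "(complex \<Rightarrow> complex \<Rightarrow> complex) \<Rightarrow> bool" where
  "cps2 u \<longleftrightarrow> (\<exists>r>0. \<exists>a::nat \<Rightarrow> nat \<Rightarrow> complex. \<forall>x y. norm x < r \<longrightarrow> norm y < r \<longrightarrow>
        ((\<lambda>(m,n). a m n * x ^ m * y ^ n) has_sum u x y) UNIV)"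

definition unit2 :: "(complex \<Rightarrow> complex \<Rightarrow> complex) \<Rightarrow> bool" where
  "unit2 u \<longleftrightarrow> cps2 u \<and> u 0 0 \<noteq> 0"

definition Oij :: "(nat \<Rightarrow> real poly) \<Rightarrow> (nat \<Rightarrow> nat) \<Rightarrow> nat \<Rightarrow> nat \<Rightarrow> enat" where
  "Oij q L i j = min (Ord (\<lambda>x. poly (map_poly of_real (q j - q i)) x))
                     (min (enat (2 * L j)) (enat (2 * L i)))"

end

theory Submission
  imports Defs "HOL-Complex_Analysis.Complex_Analysis"
begin



lemma ord_infinite:
  assumes hol: "f holomorphic_on ball 0 r" and "Ord f = \<infinity>" and w: "w \<in> ball 0 r"
  shows "f w = 0"
proof -
  have z: "(deriv ^^ n) f 0 = 0" for n using assms(2) unfolding Ord_def by (auto split: if_splits)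
  have "(\<lambda>n. (deriv ^^ n) f 0 / fact n * (w - 0)^n) sums f w"
    by (rule holomorphic_power_series[OF hol w])
  then have "(\<lambda>n. 0) sums f w" by (simp add: z)
  then show ?thesis using sums_0 sums_unique2 by blast
qed

lemma ord_finite:
  assumes hol: "f holomorphic_on ball 0 r" and r: "r > 0" and "Ord f = enat m"
  obtains g r' where "r' > 0" "g holomorphic_on ball 0 r'"
    "\<And>w. w \<in> ball 0 r' \<Longrightarrow> f w = w^m * g w" "\<And>w. w \<in> ball 0 r' \<Longrightarrow> g w \<noteq> 0"
proof -
  have ex: "\<exists>n. (deriv ^^ n) f 0 \<noteq> 0" and m: "m = (LEAST n. (deriv ^^ n) f 0 \<noteq> 0)"
    using assms(3) unfolding Ord_def by (auto split: if_splits)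
  have dm: "(deriv ^^ m) f 0 \<noteq> 0" using LeastI_ex[OF ex] m by simp
  have lt: "(deriv ^^ i) f 0 = 0" if "i < m" for i using not_less_Least[of i "\<lambda>n. (deriv ^^ n) f 0 \<noteq> 0"] that m by auto
  show ?thesis
  proof (cases "m = 0")
    case True
    then have f0: "f 0 \<noteq> 0" using dm by simp
    have "continuous_on (ball 0 r) f" using hol holomorphic_on_imp_continuous_on by blast
    then have "isCont f 0" using r by (simp add: continuous_on_eq_continuous_at)
    then obtain d where d: "d > 0" "\<And>w. dist 0 w < d \<Longrightarrow> f w \<noteq> 0"
      using continuous_at_avoid[of 0 f 0] f0 by (auto simp: isCont_def continuous_at)
    define r' where "r' = min r d"
    show ?thesis
    proof (rule that[of r' f])
      show "0 < r'" using r d by (simp add: r'_def)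
      show "f holomorphic_on ball 0 r'" using hol by (rule holomorphic_on_subset) (auto simp: r'_def)
      show "\<And>w. w \<in> ball 0 r' \<Longrightarrow> f w = w ^ m * f w" using True by simp
      show "\<And>w. w \<in> ball 0 r' \<Longrightarrow> f w \<noteq> 0" using d(2) by (simp add: r'_def)
    qed
  next
    case False
    have f0: "f 0 = 0" using lt[of 0] False by simp
    obtain g r' where "0 < r'" "g holomorphic_on ball 0 r'"
      "\<And>w. w \<in> ball 0 r' \<Longrightarrow> f w - f 0 = (w - 0)^m * g w" "\<And>w. w \<in> ball 0 r' \<Longrightarrow> g w \<noteq> 0"
    proof (rule holomorphic_factor_order_of_zero[OF hol open_ball _ _ dm])
      show "0 \<in> ball (0::complex) r" using r by simp
      show "0 < m" using False by simp
      show "\<And>i. 0 < i \<Longrightarrow> i < m \<Longrightarrow> (deriv ^^ i) f 0 = 0" using lt by blast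
    qed blast
    then show ?thesis using that f0 by auto
  qed
qed

lemma ev_small:
  assumes "k \<ge> (1::nat)" "e > 0"
  shows "\<forall>\<^sub>F s in at (0::complex). norm (s^k) < e"
proof -
  have "((\<lambda>s::complex. s^k) \<longlongrightarrow> 0^k) (at 0)" by (intro tendsto_eq_intros) auto
  then have "((\<lambda>s::complex. s^k) \<longlongrightarrow> 0) (at 0)" using assms by (simp add: zero_power)
  then show ?thesis using assms(2) by (auto dest: tendstoD simp: dist_norm)
qed

lemma ord_sub:
  fixes f :: "complex \<Rightarrow> complex"
  assumes hol: "f holomorphic_on ball 0 r" and r: "r > 0" and k: "k \<ge> 1"
    and lim: "((\<lambda>s. f (s^k) / s^(k*m)) \<longlongrightarrow> c) (at 0)" and c: "c \<noteq> 0"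
  shows "Ord f = enat m"
proof (cases "Ord f")
  case infinity
  have "\<forall>\<^sub>F s in at (0::complex). norm (s^k) < r" by (rule ev_small[OF k r])
  then have "\<forall>\<^sub>F s in at 0. f (s^k) / s^(k*m) = 0"
    by eventually_elim (use ord_infinite[OF hol infinity] in auto)
  then have "((\<lambda>s. f (s^k) / s^(k*m)) \<longlongrightarrow> 0) (at 0)" by (rule tendsto_eventually)
  then have "c = 0" using lim tendsto_unique by (metis trivial_limit_at)
  then show ?thesis using c by simp
next
  case (enat m')
  obtain g r' where r': "r' > 0" and gh: "g holomorphic_on ball 0 r'"
    and fg: "\<And>w. w \<in> ball 0 r' \<Longrightarrow> f w = w^m' * g w" and gnz: "\<And>w. w \<in> ball 0 r' \<Longrightarrow> g w \<noteq> 0"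
    using ord_finite[OF hol r enat] by metis
  have "isCont g 0" using gh r' holomorphic_on_imp_continuous_on continuous_on_interior
    by (metis centre_in_ball interior_ball)
  moreover have "((\<lambda>s::complex. s^k) \<longlongrightarrow> 0) (at 0)"
    using k by (intro tendsto_eq_intros) (auto simp: zero_power)
  ultimately have glim: "((\<lambda>s. g (s^k)) \<longlongrightarrow> g 0) (at 0)" using isCont_tendsto_compose by blast
  have g0: "g 0 \<noteq> 0" using gnz r' by simp
  have ev: "\<forall>\<^sub>F s in at 0. f (s^k) = s^(k*m') * g (s^k) \<and> s \<noteq> 0"
  proof -
    have "\<forall>\<^sub>F s in at (0::complex). s \<noteq> 0" by (simp add: eventually_at_filter)
    with ev_small[OF k r'] show ?thesis
    by eventually_elim (auto simp: fg power_mult)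
  qed
  consider "m' < m" | "m' = m" | "m' > m" by linarith
  then show ?thesis
  proof cases
    case 1
    have "((\<lambda>s. s^(k*(m-m')) * (f (s^k) / s^(k*m))) \<longlongrightarrow> 0^(k*(m-m')) * c) (at 0)"
      by (intro tendsto_intros lim)
    moreover have "0^(k*(m-m')) = (0::complex)" using 1 k by simp
    moreover have "\<forall>\<^sub>F s in at 0. s^(k*(m-m')) * (f (s^k) / s^(k*m)) = g (s^k)"
      using ev
    proof eventually_elim
      case (elim s)
      have "k*m = k*(m-m') + k*m'" using 1 by (simp add: algebra_simps)
      then show ?case using elim by (simp add: power_add)
    qed
    ultimately have "((\<lambda>s. g (s^k)) \<longlongrightarrow> 0) (at 0)" using Lim_transform_eventually by fastforce
    then have "g 0 = 0" using glim tendsto_unique by (metis trivial_limit_at)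
    then show ?thesis using g0 by simp
  next
    case 3
    have "((\<lambda>s. s^(k*(m'-m)) * g (s^k)) \<longlongrightarrow> 0^(k*(m'-m)) * g 0) (at 0)"
      by (intro tendsto_intros glim)
    moreover have "0^(k*(m'-m)) = (0::complex)" using 3 k by simp
    moreover have "\<forall>\<^sub>F s in at 0. s^(k*(m'-m)) * g (s^k) = f (s^k) / s^(k*m)"
      using ev
    proof eventually_elim
      case (elim s)
      have "k*m' = k*(m'-m) + k*m" using 3 by (simp add: algebra_simps)
      then show ?case using elim by (simp add: power_add)
    qed
    ultimately have "((\<lambda>s. f (s^k) / s^(k*m)) \<longlongrightarrow> 0) (at 0)" using Lim_transform_eventually by fastforce
    then have "c = 0" using lim tendsto_unique by (metis trivial_limit_at)
    then show ?thesis using c by simp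
  qed (simp add: enat)
qed



lemma pow_bound:
  fixes x y :: complex and \<rho> :: real
  assumes "norm x \<le> \<rho>" "norm y \<le> \<rho>" "\<rho> > 0" "(m,n) \<noteq> (0,0)"
  shows "norm (x^m * y^n) \<le> ((norm x + norm y) / \<rho>) * (\<rho>^m * \<rho>^n)"
proof -
  define \<mu> where "\<mu> = max (norm x) (norm y)"
  have mu: "0 \<le> \<mu>" "\<mu> \<le> \<rho>" "\<mu> \<le> norm x + norm y" using assms by (auto simp: \<mu>_def le_max_iff_disj)
  have "norm (x^m * y^n) = norm x ^ m * norm y ^ n" by (simp add: norm_mult norm_power)
  also have "\<dots> \<le> \<mu>^m * \<mu>^n"
    using mu by (intro mult_mono power_mono) (auto simp: \<mu>_def)
  also have "\<dots> = \<mu>^(m+n)" by (simp add: power_add)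
  also have "\<dots> = \<mu> * \<mu>^(m+n-1)" using assms(4)
    by (metis add_is_0 not_gr0 old.prod.inject power_eq_if)
  also have "\<dots> \<le> \<mu> * \<rho>^(m+n-1)" using mu by (intro mult_left_mono power_mono) auto
  also have "\<dots> \<le> (norm x + norm y) * \<rho>^(m+n-1)" using mu assms(3) by (intro mult_right_mono) auto
  also have "\<dots> = ((norm x + norm y) / \<rho>) * (\<rho> * \<rho>^(m+n-1))" using assms(3) by simp
  also have "\<rho> * \<rho>^(m+n-1) = \<rho>^(m+n)" using assms(4)
    by (metis add_is_0 not_gr0 old.prod.inject power_eq_if)
  finally show ?thesis by (simp add: power_add)
qed

lemma cps2_bound:
  assumes "cps2 u"
  shows "\<exists>\<delta>>0. \<exists>C. \<forall>x y. norm x < \<delta> \<longrightarrow> norm y < \<delta> \<longrightarrow> norm (u x y - u 0 0) \<le> C * (norm x + norm y)"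
proof -
  obtain r a where r: "r > 0" and hs: "\<And>x y. norm x < r \<Longrightarrow> norm y < r \<Longrightarrow>
        ((\<lambda>(m,n). a m n * x ^ m * y ^ n) has_sum u x y) UNIV"
    using assms unfolding cps2_def by blast
  define \<rho> where "\<rho> = r/2"
  have rho: "\<rho> > 0" "\<rho> < r" using r by (auto simp: \<rho>_def)
  have "((\<lambda>(m,n). a m n * complex_of_real \<rho> ^ m * complex_of_real \<rho> ^ n) has_sum u \<rho> \<rho>) UNIV"
    using hs rho by simp
  then have "(\<lambda>p. norm ((\<lambda>(m,n). a m n * complex_of_real \<rho> ^ m * complex_of_real \<rho> ^ n) p)) summable_on UNIV"
    using summable_on_iff_abs_summable_on_complex has_sum_imp_summable by blast
  moreover have "(\<lambda>p. norm ((\<lambda>(m,n). a m n * complex_of_real \<rho> ^ m * complex_of_real \<rho> ^ n) p))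
      = (\<lambda>(m,n). norm (a m n) * (\<rho> ^ m * \<rho> ^ n))"
    using rho by (auto simp: norm_mult norm_power fun_eq_iff)
  ultimately have Nsum: "(\<lambda>(m,n). norm (a m n) * (\<rho> ^ m * \<rho> ^ n)) summable_on UNIV" by simp
  define S where "S = infsum (\<lambda>(m,n). norm (a m n) * (\<rho> ^ m * \<rho> ^ n)) UNIV"
  have NS: "((\<lambda>(m,n). norm (a m n) * (\<rho> ^ m * \<rho> ^ n)) has_sum S) UNIV"
    using Nsum S_def has_sum_infsum by blast
  have "norm (u x y - u 0 0) \<le> (S/\<rho>) * (norm x + norm y)" if xy: "norm x < \<rho>" "norm y < \<rho>" for x y
  proof -
    have h1: "((\<lambda>(m,n). a m n * x ^ m * y ^ n) has_sum u x y) UNIV" using hs xy rho by simp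
    have h0: "((\<lambda>(m,n). a m n * 0 ^ m * 0 ^ n) has_sum u 0 0) UNIV" using hs r by simp
    have hd: "((\<lambda>p. (\<lambda>(m,n). a m n * x ^ m * y ^ n) p + (-1) * (\<lambda>(m,n). a m n * 0 ^ m * 0 ^ n) p)
        has_sum (u x y + (-1) * u 0 0)) UNIV"
      by (intro has_sum_add h1 has_sum_cmult_right h0)
    have hb: "((\<lambda>p. ((norm x + norm y)/\<rho>) * (\<lambda>(m,n). norm (a m n) * (\<rho> ^ m * \<rho> ^ n)) p)
        has_sum (((norm x + norm y)/\<rho>) * S)) UNIV"
      by (intro has_sum_cmult_right NS)
    have "norm (u x y + (-1) * u 0 0) \<le> ((norm x + norm y)/\<rho>) * S"
    proof (rule norm_infsum_le[OF hd hb])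
      fix p :: "nat \<times> nat"
      obtain m n where p: "p = (m,n)" by (cases p)
      show "norm ((\<lambda>(m,n). a m n * x ^ m * y ^ n) p + (-1) * (\<lambda>(m,n). a m n * 0 ^ m * 0 ^ n) p)
         \<le> ((norm x + norm y)/\<rho>) * (\<lambda>(m,n). norm (a m n) * (\<rho> ^ m * \<rho> ^ n)) p"
      proof (cases "(m,n) = (0,0)")
        case True
        then show ?thesis using p rho by simp
      next
        case False
        then have "a m n * 0 ^ m * 0 ^ n = 0" by auto
        then have "norm (a m n * x ^ m * y ^ n + (-1) * (a m n * 0 ^ m * 0 ^ n)) = norm (a m n) * norm (x^m * y^n)"
          by (simp only: mult.assoc norm_mult) (simp add: norm_mult)
        also have "\<dots> \<le> norm (a m n) * (((norm x + norm y) / \<rho>) * (\<rho>^m * \<rho>^n))"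
          using pow_bound[of x \<rho> y m n] xy rho False by (intro mult_left_mono) auto
        finally show ?thesis using p by (simp add: algebra_simps)
      qed
    qed
    then show ?thesis by (simp add: algebra_simps add_divide_distrib)
  qed
  then show ?thesis using rho by blast
qed



lemma poly_of_real_map: "poly (map_poly of_real p) (of_real x) = (of_real (poly p x) :: complex)"
  by (induction p) (auto simp: map_poly_pCons)

lemma map_poly_of_real_diff: "map_poly (of_real :: real \<Rightarrow> complex) (p - q) = map_poly of_real p - map_poly of_real q"
  by (simp add: poly_eq_iff coeff_map_poly)

lemma degree_map_poly_le': "degree (map_poly (\<lambda>c. poly c x) P) \<le> degree P"
  by (rule degree_le) (simp add: coeff_map_poly coeff_eq_0)

lemma pev_sum:
  assumes "degree P \<le> N"
  shows "pev P x y = (\<Sum>i\<le>N. poly (coeff P i) x * y^i)"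
proof -
  let ?p = "map_poly (\<lambda>c. poly c x) P"
  have "degree ?p \<le> N" using degree_map_poly_le'[of x P] assms by linarith
  then have "poly ?p y = poly (\<Sum>i\<le>N. monom (coeff ?p i) i) y" by (simp add: poly_as_sum_of_monoms')
  also have "\<dots> = (\<Sum>i\<le>N. poly (coeff P i) x * y^i)" by (simp add: poly_sum poly_monom coeff_map_poly)
  finally show ?thesis by (simp add: pev_def)
qed

definition pevd :: "complex poly poly \<Rightarrow> complex \<Rightarrow> complex \<Rightarrow> complex" where
  "pevd P x y = poly (pderiv (map_poly (\<lambda>c. poly c x) P)) y"

lemma pev_deriv: "((\<lambda>y. pev P x y) has_field_derivative pevd P x y) (at y)"
  unfolding pev_def pevd_def by (rule poly_DERIV)

lemma pevd_sum:
  assumes "degree P \<le> N"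
  shows "pevd P x y = (\<Sum>i\<le>N. of_nat (Suc i) * poly (coeff P (Suc i)) x * y^i)"
proof -
  let ?p = "pderiv (map_poly (\<lambda>c. poly c x) P)"
  have "degree ?p \<le> N" using degree_map_poly_le'[of x P] assms
    by (simp add: degree_pderiv)
  then have "poly ?p y = poly (\<Sum>i\<le>N. monom (coeff ?p i) i) y" by (simp add: poly_as_sum_of_monoms')
  also have "\<dots> = (\<Sum>i\<le>N. of_nat (Suc i) * poly (coeff P (Suc i)) x * y^i)"
    by (simp add: poly_sum poly_monom coeff_map_poly coeff_pderiv)
  finally show ?thesis by (simp add: pevd_def)
qed

lemma pev_hol:
  assumes "h1 holomorphic_on S" "h2 holomorphic_on S"
  shows "(\<lambda>x. pev P (h1 x) (h2 x)) holomorphic_on S"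
  unfolding pev_sum[OF order_refl]
  by (intro holomorphic_on_sum holomorphic_on_mult poly_holomorphic_on holomorphic_on_power assms)

lemma pevd_hol:
  assumes "h1 holomorphic_on S" "h2 holomorphic_on S"
  shows "(\<lambda>x. pevd P (h1 x) (h2 x)) holomorphic_on S"
  unfolding pevd_sum[OF order_refl]
  by (intro holomorphic_on_sum holomorphic_on_mult poly_holomorphic_on holomorphic_on_power holomorphic_on_const assms)

lemma cps1_hol:
  assumes "cps1 f" obtains r where "r > 0" "f holomorphic_on ball 0 r"
proof -
  obtain r a where r: "r > 0" and s: "\<And>x. norm x < r \<Longrightarrow> (\<lambda>n. a n * x ^ n) sums f x"
    using assms unfolding cps1_def by blast
  have "f holomorphic_on ball 0 r"
    by (rule power_series_holomorphic[where a=a]) (simp add: s)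
  then show ?thesis using that r by blast
qed

lemma rps1_hol:
  assumes "rps1 f" obtains r where "r > 0" "f holomorphic_on ball 0 r"
    "\<And>x. x \<in> \<real> \<Longrightarrow> norm x < r \<Longrightarrow> f x \<in> \<real>"
proof -
  obtain r a where r: "r > 0" and s: "\<And>x. norm x < r \<Longrightarrow> (\<lambda>n. complex_of_real (a n) * x ^ n) sums f x"
    using assms unfolding rps1_def by blast
  have "f holomorphic_on ball 0 r"
    by (rule power_series_holomorphic[where a="\<lambda>n. complex_of_real (a n)"]) (simp add: s)
  moreover have "f x \<in> \<real>" if x: "x \<in> \<real>" "norm x < r" for x
  proof -
    have "(\<lambda>n. Im (complex_of_real (a n) * x ^ n)) sums Im (f x)" using s[OF x(2)] by (rule sums_Im)
    moreover have "(\<lambda>n. Im (complex_of_real (a n) * x ^ n)) = (\<lambda>n. 0)"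
    proof
      fix n
      obtain xr where "x = of_real xr" using x(1) Reals_cases by blast
      then show "Im (complex_of_real (a n) * x ^ n) = 0" by (simp flip: of_real_power of_real_mult)
    qed
    ultimately have "(\<lambda>n. 0) sums Im (f x)" by simp
    then have "Im (f x) = 0" using sums_unique2 sums_zero by blast
    then show ?thesis by (simp add: complex_is_Real_iff)
  qed
  ultimately show ?thesis using that[OF r] by blast
qed

lemma real_at_0:
  fixes g :: "complex \<Rightarrow> complex"
  assumes "isCont g 0" "r > 0" "\<And>x. x \<in> \<real> \<Longrightarrow> x \<noteq> 0 \<Longrightarrow> norm x < r \<Longrightarrow> g x \<in> \<real>"
  shows "g 0 \<in> \<real>"
proof -
  define X where "X n = complex_of_real (inverse (real (Suc n)))" for n
  have "(\<lambda>n. inverse (real (Suc n))) \<longlonglongrightarrow> 0"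
    using LIMSEQ_inverse_real_of_nat .
  then have "(\<lambda>n. complex_of_real (inverse (real (Suc n)))) \<longlonglongrightarrow> of_real 0" by (rule tendsto_of_real)
  then have X: "X \<longlonglongrightarrow> 0" unfolding X_def[abs_def] by (simp only: of_real_0)
  then have gX: "(\<lambda>n. g (X n)) \<longlonglongrightarrow> g 0" using assms(1) isCont_tendsto_compose by blast
  have "\<forall>\<^sub>F n in sequentially. norm (X n) < r" using X assms(2) by (auto dest: tendstoD simp: dist_norm)
  then have "\<forall>\<^sub>F n in sequentially. g (X n) \<in> \<real>"
  proof eventually_elim
    case (elim n)
    have nz: "(1::complex) + of_nat n \<noteq> 0" by (metis of_nat_Suc of_nat_eq_0_iff nat.distinct(1))
    show ?case by (rule assms(3)) (use elim nz in \<open>simp_all add: X_def\<close>)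
  qed
  then show ?thesis using Lim_in_closed_set[OF closed_complex_Reals _ _ gX] by simp
qed


lemma hol_isCont: "f holomorphic_on ball 0 r \<Longrightarrow> r > 0 \<Longrightarrow> isCont f 0"
  using holomorphic_on_imp_continuous_on continuous_on_interior
  by (metis centre_in_ball interior_ball)

lemma deriv_zero_fun: "(deriv ^^ n) (\<lambda>x::complex. 0::complex) = (\<lambda>x. 0)"
  by (induction n) auto

lemma Ord_zero: "Ord (\<lambda>x::complex. 0::complex) = \<infinity>"
  unfolding Ord_def by (simp add: deriv_zero_fun)

lemma ord_lim:
  fixes f :: "complex \<Rightarrow> complex"
  assumes "f holomorphic_on ball 0 r" "r > 0"
    and "((\<lambda>s. f s / s^m) \<longlongrightarrow> c) (at 0)" "c \<noteq> 0"
  shows "Ord f = enat m"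
  using ord_sub[of f r 1 m c] assms by simp

lemma cps2_lim:
  assumes "cps2 u" "(a \<longlongrightarrow> 0) F" "(b \<longlongrightarrow> 0) F"
  shows "((\<lambda>z. u (a z) (b z)) \<longlongrightarrow> u 0 0) F"
proof -
  obtain \<delta> C where d: "\<delta> > 0" and bd: "\<And>x y. norm x < \<delta> \<Longrightarrow> norm y < \<delta> \<Longrightarrow> norm (u x y - u 0 0) \<le> C * (norm x + norm y)"
    using cps2_bound[OF assms(1)] by blast
  have "\<forall>\<^sub>F z in F. norm (a z) < \<delta>" using assms(2) d by (auto dest: tendstoD simp: dist_norm)
  moreover have "\<forall>\<^sub>F z in F. norm (b z) < \<delta>" using assms(3) d by (auto dest: tendstoD simp: dist_norm)
  ultimately have "\<forall>\<^sub>F z in F. norm (u (a z) (b z) - u 0 0) \<le> C * (norm (a z) + norm (b z))"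
    by eventually_elim (rule bd)
  moreover have "((\<lambda>z. C * (norm (a z) + norm (b z))) \<longlongrightarrow> C * (norm (0::complex) + norm (0::complex))) F"
    by (intro tendsto_intros assms(2,3))
  ultimately have "((\<lambda>z. u (a z) (b z) - u 0 0) \<longlongrightarrow> 0) F"
    using Lim_null_comparison by force
  then show ?thesis by (rule LIM_zero_cancel)
qed

lemma AB_P: "Apart P x y + \<i> * Bpart P x y = pev P x y"
  unfolding Apart_def Bpart_def by (simp add: field_simps)

lemma F_form: "Apart P x y + of_real t * Bpart P x y
   = (1/2 + of_real t / (2*\<i>)) * pev P x y + (1/2 - of_real t / (2*\<i>)) * pev (pbar P) x y"
  unfolding Apart_def Bpart_def by (simp add: field_simps)



lemma sum_enat: "(\<Sum>i\<in>A. enat (f i)) = enat (\<Sum>i\<in>A. f i)"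
  by (induction A rule: infinite_finite_induct) (auto simp: zero_enat_def)

lemma div_helper: "(c::complex) \<noteq> 0 \<Longrightarrow> (- a + b * c * d) / c = - (a / c) + b * d"
  by (simp add: field_simps)

theorem corollary3p6:
  fixes P :: "complex poly poly"
    and M k :: nat
    and u :: "complex \<Rightarrow> complex \<Rightarrow> complex"
    and L :: "nat \<Rightarrow> nat"
    and q :: "nat \<Rightarrow> real poly"
    and \<psi> :: "nat \<Rightarrow> complex \<Rightarrow> complex"
    and t :: real
    and ut :: "complex \<Rightarrow> complex \<Rightarrow> complex"
    and \<psi>t :: "nat \<Rightarrow> complex \<Rightarrow> complex"
  assumes nozero: "\<forall>x::real. \<forall>y::complex. Im y > 0 \<longrightarrow> pev P (of_real x) y \<noteq> 0"
    and coprime: "coprime P (pbar P)"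
    and M_def: "Ord (\<lambda>y. pev P 0 y) = enat M"
    and lead_real: "coeff (at_x0 P) M \<in> \<real>"
    \<comment> \<open>local Puiseux factorization of P (with x = s^k)\<close>
    and k_pos: "k \<ge> 1"
    and u_unit: "unit2 u"
    and q0: "\<forall>j<M. poly (q j) 0 = 0"
    and qdeg: "\<forall>j<M. degree (q j) < 2 * L j"
    and \<psi>_an: "\<forall>j<M. cps1 (\<psi> j)"
    and \<psi>_im: "\<forall>j<M. Im (\<psi> j 0) > 0"
    and factP: "\<exists>r>0. \<forall>s y. norm s < r \<longrightarrow> norm y < r \<longrightarrow>
        pev P (s ^ k) y = u (s ^ k) y *
          (\<Prod>j<M. y + poly (map_poly of_real (q j)) (s ^ k) + (s ^ k) ^ (2 * L j) * \<psi> j s)"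
    \<comment> \<open>t is proper, with the corresponding factorization of A + tB\<close>
    and ut_unit: "unit2 ut"
    and \<psi>t_an: "\<forall>j<M. rps1 (\<psi>t j)"
    and factt: "\<exists>r>0. \<forall>x y. norm x < r \<longrightarrow> norm y < r \<longrightarrow>
        Apart P x y + of_real t * Bpart P x y = ut x y *
          (\<Prod>j<M. y + poly (map_poly of_real (q j)) x + x ^ (2 * L j) * \<psi>t j x)"
    and ordt: "\<forall>i<M. \<forall>j<M. i \<noteq> j \<longrightarrow>
        Ord (\<lambda>x. poly (map_poly of_real (q j - q i)) x
                 + x ^ (2 * L j) * \<psi>t j x - x ^ (2 * L i) * \<psi>t i x) = Oij q L i j"
  shows "\<forall>j<M.
     Ord (\<lambda>x. Bpart P x (- poly (map_poly of_real (q j)) x - x ^ (2 * L j) * \<psi>t j x))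
        = (\<Sum>i<M. Oij q L i j)
   \<and> (\<Sum>i<M. Oij q L i j) = enat (2 * L j) + (\<Sum>i\<in>{..<M} - {j}. Oij q L i j)
   \<and> Ord (\<lambda>x. deriv (\<lambda>y. Apart P x y + of_real t * Bpart P x y)
                 (- poly (map_poly of_real (q j)) x - x ^ (2 * L j) * \<psi>t j x))
        = (\<Sum>i\<in>{..<M} - {j}. Oij q L i j)"
proof (intro allI impI)
  fix j assume j: "j < M"
  define Q where "Q i (x::complex) = poly (map_poly of_real (q i)) x" for i x
  define y0 where "y0 (x::complex) = - Q j x - x^(2*L j) * \<psi>t j x" for x
  define E where "E i (x::complex) = poly (map_poly of_real (q j - q i)) x + x ^ (2 * L j) * \<psi>t j x - x ^ (2 * L i) * \<psi>t i x" for i x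
  define od where "od i = the_enat (Oij q L i j)" for i
  have OO: "Oij q L i j = enat (od i) \<and> od i \<le> 2 * L i \<and> od i \<le> 2 * L j" for i
  proof -
    have le1: "Oij q L i j \<le> enat (2 * L j)" and le2: "Oij q L i j \<le> enat (2 * L i)"
      unfolding Oij_def by (auto simp: min_le_iff_disj)
    then have "Oij q L i j \<noteq> \<infinity>" using enat_ord_simps(6) by (metis infinity_ileE)
    then have eq: "Oij q L i j = enat (od i)" unfolding od_def by (cases "Oij q L i j") auto
    show ?thesis using eq le1 le2 by simp
  qed
  have Ojj: "Oij q L j j = enat (2 * L j)"
  proof -
    have "poly (0::complex poly) = (\<lambda>x. 0)" by auto
    then show ?thesis unfolding Oij_def by (simp add: Ord_zero)
  qed
  then have oj: "od j = 2 * L j" using OO[of j] by simp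
  have Lpos: "L i > 0" if "i < M" for i using qdeg that by fastforce
  have Ey: "y0 x + Q i x + x^(2*L i) * \<psi>t i x = - E i x" for i x
    by (simp add: y0_def E_def Q_def map_poly_of_real_diff poly_diff algebra_simps)
  have Q0: "Q i 0 = 0" if "i < M" for i
    using poly_of_real_map[of "q i" 0] q0 that by (simp add: Q_def)
  have EQ: "E i x = Q j x - Q i x + x ^ (2 * L j) * \<psi>t j x - x ^ (2 * L i) * \<psi>t i x" for i x
    by (simp add: E_def Q_def map_poly_of_real_diff poly_diff)
  have Qreal: "Q i x \<in> \<real>" if "x \<in> \<real>" for i x
    using that poly_of_real_map by (auto simp: Q_def elim!: Reals_cases)
  have "\<forall>i<M. \<exists>r>0. \<psi>t i holomorphic_on ball 0 r \<and> (\<forall>x. x \<in> \<real> \<longrightarrow> norm x < r \<longrightarrow> \<psi>t i x \<in> \<real>)"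
    using \<psi>t_an rps1_hol by metis
  then obtain rt where rt: "\<And>i. i < M \<Longrightarrow> rt i > 0" "\<And>i. i < M \<Longrightarrow> \<psi>t i holomorphic_on ball 0 (rt i)"
    "\<And>i x. i < M \<Longrightarrow> x \<in> \<real> \<Longrightarrow> norm x < rt i \<Longrightarrow> \<psi>t i x \<in> \<real>"
    by metis
  have "\<forall>i<M. \<exists>r>0. \<psi> i holomorphic_on ball 0 r"
    using \<psi>_an cps1_hol by metis
  then obtain rp where rp: "\<And>i. i < M \<Longrightarrow> rp i > 0" "\<And>i. i < M \<Longrightarrow> \<psi> i holomorphic_on ball 0 (rp i)"
    by metis
  have cont_t: "isCont (\<psi>t i) 0" if "i < M" for i using hol_isCont rt that by blast
  have cont_p: "isCont (\<psi> i) 0" if "i < M" for i using hol_isCont rp that by blast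
  have t0real: "\<psi>t i 0 \<in> \<real>" if "i < M" for i using rt that by simp
  have y0hol: "y0 holomorphic_on ball 0 (rt j)"
    unfolding y0_def[abs_def] Q_def
    by (intro holomorphic_on_diff holomorphic_on_minus holomorphic_on_mult poly_holomorphic_on
        holomorphic_on_id holomorphic_on_ident holomorphic_on_power rt j)
  have y0lim: "(y0 \<longlongrightarrow> 0) (at 0)"
  proof -
    have "isCont y0 0" using hol_isCont[OF y0hol rt(1)[OF j]] .
    moreover have "y0 0 = 0" using Q0[OF j] Lpos[OF j] by (simp add: y0_def)
    ultimately show ?thesis by (simp add: isCont_def)
  qed
  have sk: "((\<lambda>s::complex. s^k) \<longlongrightarrow> 0) (at 0)"
    using k_pos by (intro tendsto_eq_intros) (auto simp: zero_power)
  have skf: "filterlim (\<lambda>s::complex. s^k) (at 0) (at 0)"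
  proof (rule filterlim_atI[OF sk])
    have "\<forall>\<^sub>F s in at (0::complex). s \<noteq> 0" by (simp add: eventually_at_filter)
    then show "\<forall>\<^sub>F s in at (0::complex). s^k \<noteq> 0" by eventually_elim simp
  qed
  have nz_at: "\<forall>\<^sub>F s in at (0::complex). s \<noteq> 0" by (simp add: eventually_at_filter)
  have "\<forall>i<M. \<exists>e. e \<in> \<real> \<and> ((\<lambda>x. E i x / x^(od i)) \<longlongrightarrow> e) (at 0) \<and> (i \<noteq> j \<longrightarrow> e \<noteq> 0)"
  proof (intro allI impI)
    fix i assume i: "i < M"
    show "\<exists>e. e \<in> \<real> \<and> ((\<lambda>x. E i x / x^(od i)) \<longlongrightarrow> e) (at 0) \<and> (i \<noteq> j \<longrightarrow> e \<noteq> 0)"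
    proof (cases "i = j")
      case True
      have "E i = (\<lambda>x. 0)" using True by (simp add: E_def fun_eq_iff)
      then show ?thesis using True by (intro exI[of _ 0]) auto
    next
      case False
      define r where "r = min (rt i) (rt j)"
      have r: "r > 0" using rt(1) i j by (simp add: r_def)
      have Ehol: "E i holomorphic_on ball 0 r"
        unfolding E_def[abs_def]
        by (intro holomorphic_on_diff holomorphic_on_add holomorphic_on_mult poly_holomorphic_on
            holomorphic_on_id holomorphic_on_ident holomorphic_on_power holomorphic_on_subset[OF rt(2)[OF i]]
            holomorphic_on_subset[OF rt(2)[OF j]]) (auto simp: r_def)
      have ordE: "Ord (E i) = enat (od i)"
        using ordt i j False OO[of i] unfolding E_def[abs_def] by auto
      obtain g r' where r': "r' > 0" and gh: "g holomorphic_on ball 0 r'"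
        and Eg: "\<And>w. w \<in> ball 0 r' \<Longrightarrow> E i w = w^(od i) * g w" and gnz: "\<And>w. w \<in> ball 0 r' \<Longrightarrow> g w \<noteq> 0"
        using ord_finite[OF Ehol r ordE] by metis
      have gc: "isCont g 0" using hol_isCont[OF gh r'] .
      have "\<forall>\<^sub>F x in at (0::complex). x \<noteq> 0 \<and> norm x < r'"
        using ev_small[of 1 r'] r' nz_at by (auto elim: eventually_elim2)
      then have "\<forall>\<^sub>F x in at 0. g x = E i x / x^(od i)"
        by eventually_elim (simp add: Eg)
      then have lim: "((\<lambda>x. E i x / x^(od i)) \<longlongrightarrow> g 0) (at 0)"
        using gc Lim_transform_eventually by (auto simp: isCont_def)
      have "g 0 \<in> \<real>"
      proof (rule real_at_0[OF gc, of "min r r'"])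
        show "0 < min r r'" using r r' by simp
        fix x :: complex assume x: "x \<in> \<real>" "x \<noteq> 0" "norm x < min r r'"
        have "E i x \<in> \<real>" unfolding EQ using x rt(3)[OF i, of x] rt(3)[OF j, of x] Qreal
          by (auto simp: r_def intro!: Reals_diff Reals_add Reals_mult Reals_power)
        then have "E i x / x^(od i) \<in> \<real>" using x by (auto intro!: Reals_divide Reals_power)
        then show "g x \<in> \<real>" using Eg[of x] x by simp
      qed
      then show ?thesis using lim gnz[of 0] r' False by auto
    qed
  qed
  then obtain e where e: "\<And>i. i < M \<Longrightarrow> e i \<in> \<real>" "\<And>i. i < M \<Longrightarrow> ((\<lambda>x. E i x / x^(od i)) \<longlongrightarrow> e i) (at 0)"
    "\<And>i. i < M \<Longrightarrow> i \<noteq> j \<Longrightarrow> e i \<noteq> 0"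
    by metis
  define fac where "fac i (s::complex) = y0 (s^k) + Q i (s^k) + (s^k)^(2 * L i) * \<psi> i s" for i s
  define c where "c i = - e i + 0^(2 * L i - od i) * (\<psi> i 0 - \<psi>t i 0)" for i
  have facl: "((\<lambda>s. fac i s / s^(k * od i)) \<longlongrightarrow> c i) (at 0) \<and> c i \<noteq> 0" if i: "i < M" for i
  proof
    have l1: "((\<lambda>s. E i (s^k) / (s^k)^(od i)) \<longlongrightarrow> e i) (at 0)"
      using filterlim_compose[OF e(2)[OF i] skf] .
    have l2: "((\<lambda>s::complex. (s^k)^(2 * L i - od i)) \<longlongrightarrow> 0^(2 * L i - od i)) (at 0)"
      using tendsto_power[OF sk] .
    have l3: "(\<psi> i \<longlongrightarrow> \<psi> i 0) (at 0)" using cont_p[OF i] by (simp add: isCont_def)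
    have l4: "((\<lambda>s. \<psi>t i (s^k)) \<longlongrightarrow> \<psi>t i 0) (at 0)" using isCont_tendsto_compose[OF cont_t[OF i] sk] .
    have lim: "((\<lambda>s. - (E i (s^k) / (s^k)^(od i)) + (s^k)^(2 * L i - od i) * (\<psi> i s - \<psi>t i (s^k))) \<longlongrightarrow> c i) (at 0)"
      unfolding c_def by (rule tendsto_add[OF tendsto_minus[OF l1] tendsto_mult[OF l2 tendsto_diff[OF l3 l4]]])
    have "\<forall>\<^sub>F s in at 0. - (E i (s^k) / (s^k)^(od i)) + (s^k)^(2 * L i - od i) * (\<psi> i s - \<psi>t i (s^k))
        = fac i s / s^(k * od i)"
      using nz_at
    proof eventually_elim
      case (elim s)
      define x where "x = s^k"
      have x0: "x \<noteq> 0" using elim by (simp add: x_def)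
      have p: "x^(2 * L i) = x^(2 * L i - od i) * x^(od i)" using OO[of i] by (simp flip: power_add)
      have "fac i s = (y0 x + Q i x + x^(2*L i) * \<psi>t i x) + x^(2 * L i) * (\<psi> i s - \<psi>t i x)"
        unfolding fac_def x_def[symmetric] by (simp add: algebra_simps)
      also have "\<dots> = - E i x + x^(2 * L i) * (\<psi> i s - \<psi>t i x)" by (simp only: Ey)
      finally have "fac i s = - E i x + x^(2 * L i) * (\<psi> i s - \<psi>t i x)" .
      moreover have "s^(k * od i) = x^(od i)" by (simp add: x_def power_mult)
      ultimately have "fac i s / s^(k * od i) = (- E i x + x^(2 * L i - od i) * x^(od i) * (\<psi> i s - \<psi>t i x)) / x^(od i)"
        unfolding p by (simp add: mult.assoc)
      also have "\<dots> = - (E i x / x^(od i)) + x^(2 * L i - od i) * (\<psi> i s - \<psi>t i x)"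
        using x0 by (intro div_helper) simp
      finally show ?case by (simp add: x_def)
    qed
    then show "((\<lambda>s. fac i s / s^(k * od i)) \<longlongrightarrow> c i) (at 0)" by (rule Lim_transform_eventually[OF lim])
    show "c i \<noteq> 0"
    proof (cases "od i < 2 * L i")
      case True
      then have "i \<noteq> j" using oj by auto
      moreover have z: "(0::complex)^(2*L i - od i) = 0" using True by simp
      have "c i = - e i" unfolding c_def z by simp
      ultimately show ?thesis using e(3)[OF i] by simp
    next
      case False
      then have "od i = 2 * L i" using OO[of i] by simp
      then have "c i = - e i + (\<psi> i 0 - \<psi>t i 0)" by (simp add: c_def)
      moreover have "Im (e i) = 0" "Im (\<psi>t i 0) = 0" using e(1)[OF i] t0real[OF i] by (auto simp: complex_is_Real_iff)
      ultimately have "Im (c i) = Im (\<psi> i 0)" by simp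
      then show ?thesis using \<psi>_im i by auto
    qed
  qed
  obtain rP where rP: "rP > 0" and fP: "\<And>s y. norm s < rP \<Longrightarrow> norm y < rP \<Longrightarrow>
      pev P (s^k) y = u (s^k) y * (\<Prod>i<M. y + Q i (s^k) + (s^k)^(2*L i) * \<psi> i s)"
    using factP unfolding Q_def by blast
  obtain rT where rT: "rT > 0" and fT: "\<And>x y. norm x < rT \<Longrightarrow> norm y < rT \<Longrightarrow>
      Apart P x y + of_real t * Bpart P x y = ut x y * (\<Prod>i<M. y + Q i x + x^(2*L i) * \<psi>t i x)"
    using factt unfolding Q_def by blast
  have Ej0: "E j x = 0" for x by (simp add: EQ)
  have prodz: "(\<Prod>i<M. y0 x + Q i x + x^(2*L i) * \<psi>t i x) = 0" for x
    using j by (intro prod_zero) (auto simp: Ey Ej0 intro!: bexI[of _ j])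
  have F0: "Apart P x (y0 x) + of_real t * Bpart P x (y0 x) = 0" if "norm x < rT" "norm (y0 x) < rT" for x
    using fT[OF that] prodz by simp
  have it: "\<i> - complex_of_real t \<noteq> 0"
  proof
    assume "\<i> - complex_of_real t = 0"
    then have "Im (\<i> - complex_of_real t) = 0" by simp
    then show False by simp
  qed
  have Bform: "Bpart P x (y0 x) = pev P x (y0 x) / (\<i> - of_real t)" if "norm x < rT" "norm (y0 x) < rT" for x
  proof -
    have "pev P x (y0 x) = Apart P x (y0 x) + \<i> * Bpart P x (y0 x)" by (simp add: AB_P)
    also have "Apart P x (y0 x) = - (of_real t * Bpart P x (y0 x))" using F0[OF that] by (simp add: eq_neg_iff_add_eq_0)
    finally have "pev P x (y0 x) = (\<i> - of_real t) * Bpart P x (y0 x)" by (simp add: algebra_simps)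
    then show ?thesis using it by simp
  qed
  have y0k: "((\<lambda>s. y0 (s^k)) \<longlongrightarrow> 0) (at 0)" using filterlim_compose[OF y0lim skf] .
  define m1 where "m1 = (\<Sum>i<M. od i)"
  have ulim: "((\<lambda>s. u (s^k) (y0 (s^k))) \<longlongrightarrow> u 0 0) (at 0)"
    using cps2_lim[OF _ sk y0k] u_unit unit2_def by blast
  have plim: "((\<lambda>s. \<Prod>i<M. fac i s / s^(k * od i)) \<longlongrightarrow> (\<Prod>i<M. c i)) (at 0)"
    by (rule tendsto_prod) (use facl in blast)
  have lim1: "((\<lambda>s. u (s^k) (y0 (s^k)) * (\<Prod>i<M. fac i s / s^(k * od i)) / (\<i> - of_real t))
      \<longlongrightarrow> u 0 0 * (\<Prod>i<M. c i) / (\<i> - of_real t)) (at 0)"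
    by (intro tendsto_divide tendsto_mult ulim plim tendsto_const it)
  have ev1: "\<forall>\<^sub>F s in at (0::complex). s \<noteq> 0 \<and> norm s < rP \<and> norm (s^k) < rT \<and> norm (y0 (s^k)) < min rT rP"
  proof -
    have a: "\<forall>\<^sub>F s in at (0::complex). norm s < rP" using ev_small[of 1 rP] rP by simp
    have b: "\<forall>\<^sub>F s in at (0::complex). norm (s^k) < rT" using ev_small[OF k_pos rT] .
    have c: "\<forall>\<^sub>F s in at (0::complex). norm (y0 (s^k)) < min rT rP"
      using y0k rT rP by (auto dest!: tendstoD[where e="min rT rP"] simp: dist_norm)
    show ?thesis using nz_at a b c by eventually_elim auto
  qed
  have "\<forall>\<^sub>F s in at (0::complex). u (s^k) (y0 (s^k)) * (\<Prod>i<M. fac i s / s^(k * od i)) / (\<i> - of_real t)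
      = Bpart P (s^k) (y0 (s^k)) / s^(k * m1)"
    using ev1
  proof eventually_elim
    case (elim s)
    have "Bpart P (s^k) (y0 (s^k)) = pev P (s^k) (y0 (s^k)) / (\<i> - of_real t)"
      using Bform elim by simp
    also have "pev P (s^k) (y0 (s^k)) = u (s^k) (y0 (s^k)) * (\<Prod>i<M. fac i s)"
      using fP[of s "y0 (s^k)"] elim by (simp add: fac_def)
    finally have 1: "Bpart P (s^k) (y0 (s^k)) = u (s^k) (y0 (s^k)) * (\<Prod>i<M. fac i s) / (\<i> - of_real t)" .
    have 2: "s^(k * m1) = (\<Prod>i<M. s^(k * od i))"
      by (simp add: m1_def sum_distrib_left power_sum)
    show ?case unfolding 1 2 by (simp add: prod_dividef)
  qed
  then have lim1': "((\<lambda>s. Bpart P (s^k) (y0 (s^k)) / s^(k * m1)) \<longlongrightarrow> u 0 0 * (\<Prod>i<M. c i) / (\<i> - of_real t)) (at 0)"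
    by (rule Lim_transform_eventually[OF lim1])
  have Bhol: "(\<lambda>x. Bpart P x (y0 x)) holomorphic_on ball 0 (rt j)"
    unfolding Bpart_def
    by (intro holomorphic_on_divide holomorphic_on_diff pev_hol holomorphic_on_ident y0hol holomorphic_on_const) auto
  have cnz: "u 0 0 * (\<Prod>i<M. c i) / (\<i> - of_real t) \<noteq> 0"
    using u_unit it facl by (auto simp: unit2_def prod_zero_iff)
  have Ord1: "Ord (\<lambda>x. Bpart P x (y0 x)) = enat m1"
    by (rule ord_sub[OF Bhol rt(1)[OF j] k_pos lim1' cnz])
  have sumO: "(\<Sum>i\<in>A. Oij q L i j) = enat (\<Sum>i\<in>A. od i)" for A
    using OO by (simp add: sum_enat)
  have C1: "Ord (\<lambda>x. Bpart P x (- poly (map_poly of_real (q j)) x - x ^ (2 * L j) * \<psi>t j x)) = (\<Sum>i<M. Oij q L i j)"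
    using Ord1 sumO[of "{..<M}"] by (simp add: y0_def Q_def m1_def)
  have C2: "(\<Sum>i<M. Oij q L i j) = enat (2 * L j) + (\<Sum>i\<in>{..<M} - {j}. Oij q L i j)"
    using sum.remove[of "{..<M}" j "\<lambda>i. Oij q L i j"] j Ojj by simp
  define \<alpha> where "\<alpha> = 1/2 + complex_of_real t / (2*\<i>)"
  define \<beta> where "\<beta> = 1/2 - complex_of_real t / (2*\<i>)"
  define D where "D x = deriv (\<lambda>y. Apart P x y + of_real t * Bpart P x y) (y0 x)" for x
  have Dhas: "((\<lambda>y. Apart P x y + of_real t * Bpart P x y) has_field_derivative (\<alpha> * pevd P x y + \<beta> * pevd (pbar P) x y)) (at y)" for x y
    unfolding F_form \<alpha>_def[symmetric] \<beta>_def[symmetric]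
    by (intro DERIV_add DERIV_cmult pev_deriv)
  have Dfun: "D x = \<alpha> * pevd P x (y0 x) + \<beta> * pevd (pbar P) x (y0 x)" for x
    unfolding D_def by (rule DERIV_imp_deriv[OF Dhas])
  have Dhol: "D holomorphic_on ball 0 (rt j)"
    unfolding Dfun[abs_def]
    by (intro holomorphic_on_add holomorphic_on_mult holomorphic_on_const pevd_hol holomorphic_on_ident y0hol)
  define Rr where "Rr x y = (\<Prod>i\<in>{..<M} - {j}. y + Q i x + x^(2*L i) * \<psi>t i x)" for x y
  define m3 where "m3 = (\<Sum>i\<in>{..<M} - {j}. od i)"
  have Rlim: "((\<lambda>x. Rr x (y0 x) / x^m3) \<longlongrightarrow> (\<Prod>i\<in>{..<M} - {j}. - e i)) (at 0)"
  proof -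
    have "((\<lambda>x. \<Prod>i\<in>{..<M} - {j}. - (E i x / x^(od i))) \<longlongrightarrow> (\<Prod>i\<in>{..<M} - {j}. - e i)) (at 0)"
      by (rule tendsto_prod) (intro tendsto_minus e(2), auto)
    moreover have "(\<Prod>i\<in>{..<M} - {j}. - (E i x / x^(od i))) = Rr x (y0 x) / x^m3" for x
      unfolding Rr_def m3_def power_sum prod_dividef[symmetric] by (simp add: Ey)
    ultimately show ?thesis by simp
  qed
  have Rcnz: "(\<Prod>i\<in>{..<M} - {j}. - e i) \<noteq> 0"
    using e(3) by (auto simp: prod_zero_iff)
  have evR: "\<forall>\<^sub>F x in at (0::complex). Rr x (y0 x) \<noteq> 0"
    using tendsto_imp_eventually_ne[OF Rlim Rcnz] by eventually_elim auto
  obtain \<delta> C0 where d: "\<delta> > 0" and bd0: "\<And>x y. norm x < \<delta> \<Longrightarrow> norm y < \<delta> \<Longrightarrow> norm (ut x y - ut 0 0) \<le> C0 * (norm x + norm y)"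
    using cps2_bound ut_unit unit2_def by metis
  define C where "C = max C0 0"
  have C: "C \<ge> 0" by (simp add: C_def)
  have bd: "norm (ut x y - ut 0 0) \<le> C * (norm x + norm y)" if "norm x < \<delta>" "norm y < \<delta>" for x y
  proof -
    have "C0 * (norm x + norm y) \<le> C * (norm x + norm y)" unfolding C_def by (intro mult_right_mono) auto
    then show ?thesis using bd0[OF that] by linarith
  qed
  define \<epsilon> where "\<epsilon> = min \<delta> rT"
  have eps: "\<epsilon> > 0" using d rT by (simp add: \<epsilon>_def)
  have ev3: "\<forall>\<^sub>F x in at (0::complex). x \<noteq> 0 \<and> norm x + norm (y0 x) < \<epsilon> \<and> Rr x (y0 x) \<noteq> 0"
  proof -
    have a: "\<forall>\<^sub>F x in at (0::complex). norm x < \<epsilon>/2" using ev_small[of 1 "\<epsilon>/2"] eps by simp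
    have b: "\<forall>\<^sub>F x in at (0::complex). norm (y0 x) < \<epsilon>/2"
      using y0lim eps by (auto dest!: tendstoD[where e="\<epsilon>/2"] simp: dist_norm)
    show ?thesis using nz_at a b evR by eventually_elim auto
  qed
  have wb: "\<forall>\<^sub>F x in at (0::complex). norm (D x / Rr x (y0 x) - ut 0 0) \<le> C * (2 * norm x + norm (y0 x))"
    using ev3
  proof eventually_elim
    case (elim x)
    let ?g = "\<lambda>y. Apart P x y + of_real t * Bpart P x y"
    let ?y = "y0 x"
    have s1: "norm x + norm ?y < \<delta>" "norm x + norm ?y < rT" using elim by (simp_all add: \<epsilon>_def)
    have xr: "norm x < rT" "norm ?y < rT" "norm x < \<delta>" using s1 norm_ge_zero[of x] norm_ge_zero[of ?y]
      by linarith+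
    have "(?g has_field_derivative D x) (at ?y)" using Dhas[of x ?y] Dfun[of x] by simp
    then have q: "((\<lambda>y. (?g y - ?g ?y) / (y - ?y)) \<longlongrightarrow> D x) (at ?y)"
      by (simp add: has_field_derivative_iff)
    have Rrl: "((\<lambda>y. Rr x y) \<longlongrightarrow> Rr x ?y) (at ?y)"
      unfolding Rr_def by (intro tendsto_prod tendsto_add tendsto_ident_at tendsto_const)
    have q2: "((\<lambda>y. (?g y - ?g ?y) / (y - ?y) / Rr x y) \<longlongrightarrow> D x / Rr x ?y) (at ?y)"
      using elim by (intro tendsto_divide q Rrl) auto
    have evy: "\<forall>\<^sub>F y in at ?y. y \<noteq> ?y \<and> norm (y - ?y) < norm x \<and> Rr x y \<noteq> 0"
    proof -
      have "\<forall>\<^sub>F y in at ?y. y \<noteq> ?y" by (simp add: eventually_at_filter)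
      moreover have "\<forall>\<^sub>F y in at ?y. norm (y - ?y) < norm x"
        using elim by (simp add: eventually_at dist_norm) (metis zero_less_norm_iff)
      moreover have "\<forall>\<^sub>F y in at ?y. Rr x y \<noteq> 0" using tendsto_imp_eventually_ne[OF Rrl] elim by blast
      ultimately show ?thesis by eventually_elim auto
    qed
    have "\<forall>\<^sub>F y in at ?y. (?g y - ?g ?y) / (y - ?y) / Rr x y = ut x y"
      using evy
    proof eventually_elim
      case (elim y)
      have ny: "norm y < rT"
        using elim s1 norm_triangle_ineq[of "y - ?y" ?y] by simp
      have "?g y = ut x y * (\<Prod>i<M. y + Q i x + x^(2*L i) * \<psi>t i x)" using fT[OF xr(1) ny] .
      also have "(\<Prod>i<M. y + Q i x + x^(2*L i) * \<psi>t i x) = (y + Q j x + x^(2*L j) * \<psi>t j x) * Rr x y"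
        unfolding Rr_def using j by (simp add: prod.remove)
      also have "y + Q j x + x^(2*L j) * \<psi>t j x = y - ?y" by (simp add: y0_def)
      finally have "?g y = ut x y * ((y - ?y) * Rr x y)" .
      moreover have "?g ?y = 0" using F0[OF xr(1,2)] .
      ultimately show ?case using elim by (simp add: field_simps)
    qed
    then have ul: "((\<lambda>y. ut x y) \<longlongrightarrow> D x / Rr x ?y) (at ?y)"
      by (rule Lim_transform_eventually[OF q2])
    have "\<forall>\<^sub>F y in at ?y. norm (ut x y - ut 0 0) \<le> C * (2 * norm x + norm ?y)"
      using evy
    proof eventually_elim
      case (elim y)
      have "norm y \<le> norm ?y + norm (y - ?y)" using norm_triangle_ineq[of "y - ?y" ?y] by simp
      then have ny: "norm y < norm ?y + norm x" using elim by simp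
      then have "norm y < \<delta>" using s1 by simp
      then have "norm (ut x y - ut 0 0) \<le> C * (norm x + norm y)" using bd xr by blast
      also have "\<dots> \<le> C * (2 * norm x + norm ?y)" using ny C by (intro mult_left_mono) auto
      finally show ?case .
    qed
    then show ?case
      by (rule Lim_norm_ubound[OF trivial_limit_at tendsto_diff[OF ul tendsto_const]])
  qed
  have wl: "((\<lambda>x. D x / Rr x (y0 x)) \<longlongrightarrow> ut 0 0) (at 0)"
  proof (rule LIM_zero_cancel, rule Lim_null_comparison[OF wb])
    have "((\<lambda>x. C * (2 * norm x + norm (y0 x))) \<longlongrightarrow> C * (2 * norm (0::complex) + norm (0::complex))) (at 0)"
      by (intro tendsto_intros y0lim)
    then show "((\<lambda>x. C * (2 * norm x + norm (y0 x))) \<longlongrightarrow> 0) (at 0)" by simp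
  qed
  have Dlim: "((\<lambda>x. D x / x^m3) \<longlongrightarrow> ut 0 0 * (\<Prod>i\<in>{..<M} - {j}. - e i)) (at 0)"
  proof -
    have "((\<lambda>x. D x / Rr x (y0 x) * (Rr x (y0 x) / x^m3)) \<longlongrightarrow> ut 0 0 * (\<Prod>i\<in>{..<M} - {j}. - e i)) (at 0)"
      by (rule tendsto_mult[OF wl Rlim])
    moreover have "\<forall>\<^sub>F x in at 0. D x / Rr x (y0 x) * (Rr x (y0 x) / x^m3) = D x / x^m3"
      using evR by eventually_elim simp
    ultimately show ?thesis by (rule Lim_transform_eventually)
  qed
  have Ord3: "Ord D = enat m3"
    by (rule ord_lim[OF Dhol rt(1)[OF j] Dlim]) (use ut_unit Rcnz in \<open>simp add: unit2_def\<close>)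
  have C3: "Ord (\<lambda>x. deriv (\<lambda>y. Apart P x y + of_real t * Bpart P x y)
                 (- poly (map_poly of_real (q j)) x - x ^ (2 * L j) * \<psi>t j x))
        = (\<Sum>i\<in>{..<M} - {j}. Oij q L i j)"
    using Ord3 sumO[of "{..<M} - {j}"] by (simp add: D_def[abs_def] y0_def Q_def m3_def)
  show "Ord (\<lambda>x. Bpart P x (- poly (map_poly of_real (q j)) x - x ^ (2 * L j) * \<psi>t j x))
        = (\<Sum>i<M. Oij q L i j)
   \<and> (\<Sum>i<M. Oij q L i j) = enat (2 * L j) + (\<Sum>i\<in>{..<M} - {j}. Oij q L i j)
   \<and> Ord (\<lambda>x. deriv (\<lambda>y. Apart P x y + of_real t * Bpart P x y)
                 (- poly (map_poly of_real (q j)) x - x ^ (2 * L j) * \<psi>t j x))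
        = (\<Sum>i\<in>{..<M} - {j}. Oij q L i j)" using C1 C2 C3 by blast
qed


end
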